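(* Let $R$ be a ring with prime subring $P$ (the subring generated by $1$). Let $M$ be a submonoid of the unit group $U(R)$ and let $C$ be a subring of $R$. Suppose that: (1) the subring generated by $P$ and $M$ is the monoid ring $P[M]$ (i.e. the natural map $P[M]\to R$ is injective); (2) for each $c\in C$ and $f\in P[M]$, $cf=0$ implies $c=0$ or $f=0$; (3) every element of $M$ commutes with every element of $C$; (4) $M$ is an orderable monoid, i.e. it admits a total order $<$ such that $x<y$ implies $zx<zy$ and $xz<yz$ for all $x,y,z\in M$; (5) $M$ embeds in some group $H$ such that the subgroup of $H$ generated by $M$ has trivial center. Then the subring of $R$ generated by $C$ and $M$ is the monoid ring $C[M]$ (i.e. the natural map $C[M]\to R$ is injective). *)

theory Defs
  imports "HOL-Algebra.Generated_Groups"
begin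

(* unital subring of a ring R (R modelled by a type of class ring_1) *)
definition is_subring :: "'a::ring_1 set \<Rightarrow> bool" where
  "is_subring C \<longleftrightarrow> 1 \<in> C \<and> (\<forall>x\<in>C. \<forall>y\<in>C. x - y \<in> C \<and> x * y \<in> C)"

definition units_of_ring :: "'a::ring_1 set" where
  "units_of_ring = {x. \<exists>y. x * y = 1 \<and> y * x = 1}"

definition is_submonoid :: "'a::ring_1 set \<Rightarrow> bool" where
  "is_submonoid M \<longleftrightarrow> 1 \<in> M \<and> (\<forall>x\<in>M. \<forall>y\<in>M. x * y \<in> M)"

(* prime subring P = subring generated by 1 = image of the integers *)
definition prime_subring :: "'a::ring_1 set" where
  "prime_subring = range of_int"

(* the natural map A[M] -> R (A a subset of R, M a subset of R) is injective:
   a finitely supported family of coefficients in A indexed by M whose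
   image  sum_m c_m m  vanishes is zero *)
definition monoid_ring_injective :: "'a::ring_1 set \<Rightarrow> 'a set \<Rightarrow> bool" where
  "monoid_ring_injective A M \<longleftrightarrow>
     (\<forall>S c. finite S \<longrightarrow> S \<subseteq> M \<longrightarrow> c ` S \<subseteq> A \<longrightarrow>
        (\<Sum>m\<in>S. c m * m) = 0 \<longrightarrow> (\<forall>m\<in>S. c m = 0))"

definition monoid_ring_image :: "'a::ring_1 set \<Rightarrow> 'a set \<Rightarrow> 'a set" where
  "monoid_ring_image A M =
     {x. \<exists>S c. finite S \<and> S \<subseteq> M \<and> c ` S \<subseteq> A \<and> x = (\<Sum>m\<in>S. c m * m)}"

definition orderable_monoid :: "'a::ring_1 set \<Rightarrow> bool" where
  "orderable_monoid M \<longleftrightarrow> (\<exists>lt :: 'a \<Rightarrow> 'a \<Rightarrow> bool.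
     (\<forall>x\<in>M. \<not> lt x x) \<and>
     (\<forall>x\<in>M. \<forall>y\<in>M. \<forall>z\<in>M. lt x y \<longrightarrow> lt y z \<longrightarrow> lt x z) \<and>
     (\<forall>x\<in>M. \<forall>y\<in>M. x \<noteq> y \<longrightarrow> lt x y \<or> lt y x) \<and>
     (\<forall>x\<in>M. \<forall>y\<in>M. \<forall>z\<in>M. lt x y \<longrightarrow> lt (z * x) (z * y) \<and> lt (x * z) (y * z)))"

definition monoid_embedding :: "'a::ring_1 set \<Rightarrow> ('h, 'b) monoid_scheme \<Rightarrow> ('a \<Rightarrow> 'h) \<Rightarrow> bool" where
  "monoid_embedding M H \<phi> \<longleftrightarrow> inj_on \<phi> M \<and> \<phi> ` M \<subseteq> carrier H \<and> \<phi> 1 = \<one>\<^bsub>H\<^esub> \<and>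
     (\<forall>x\<in>M. \<forall>y\<in>M. \<phi> (x * y) = \<phi> x \<otimes>\<^bsub>H\<^esub> \<phi> y)"

definition trivial_center :: "('h, 'b) monoid_scheme \<Rightarrow> 'h set \<Rightarrow> bool" where
  "trivial_center H K \<longleftrightarrow> {z \<in> K. \<forall>g\<in>K. z \<otimes>\<^bsub>H\<^esub> g = g \<otimes>\<^bsub>H\<^esub> z} = {\<one>\<^bsub>H\<^esub>}"

end

theory Submission
  imports Defs
begin


lemma key_group:
  fixes M :: "'a::ring_1 set" and H :: "'h monoid" (structure) and \<phi> :: "'a \<Rightarrow> 'h"
  assumes gr: "group H" and emb: "monoid_embedding M H \<phi>"
    and tc: "trivial_center H (generate H (\<phi> ` M))"
    and sm: "is_submonoid M"
    and aM: "a \<in> M" and bM: "b \<in> M" and eq: "\<forall>u\<in>M. b*u*a = a*u*b"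
  shows "a = b"
proof -
  interpret group H by (rule gr)
  have inj: "inj_on \<phi> M" and car: "\<phi> ` M \<subseteq> carrier H" and ph1: "\<phi> 1 = \<one>"
    and phm: "\<forall>x\<in>M. \<forall>y\<in>M. \<phi> (x * y) = \<phi> x \<otimes> \<phi> y"
    using emb unfolding monoid_embedding_def by auto
  have M1: "1 \<in> M" and Mm: "\<And>x y. x \<in> M \<Longrightarrow> y \<in> M \<Longrightarrow> x*y \<in> M" using sm unfolding is_submonoid_def by auto
  define x where "x = \<phi> a"
  define y where "y = \<phi> b"
  have xc: "x \<in> carrier H" and yc: "y \<in> carrier H" using car aM bM x_def y_def by auto
  have rel: "y \<otimes> w \<otimes> x = x \<otimes> w \<otimes> y" if wM: "w \<in> \<phi> ` M" for w
  proof -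
    obtain u where uM: "u \<in> M" and w: "w = \<phi> u" using wM by auto
    have "\<phi> (b*u*a) = \<phi> (a*u*b)" using eq uM by simp
    then show ?thesis using phm aM bM uM Mm w x_def y_def by simp
  qed
  have yx: "y \<otimes> x = x \<otimes> y"
    using rel[of \<one>] ph1 M1 xc yc by (metis image_eqI r_one)
  define z where "z = inv x \<otimes> y"
  have zc: "z \<in> carrier H" using xc yc z_def by simp
  have zw: "z \<otimes> w = w \<otimes> z" if "w \<in> \<phi> ` M" for w
  proof -
    have wc: "w \<in> carrier H" using that car by auto
    have "x \<otimes> (z \<otimes> w) \<otimes> x = y \<otimes> w \<otimes> x"
      using xc yc wc z_def by (simp add: m_assoc[symmetric])
    also have "\<dots> = x \<otimes> w \<otimes> y" using rel that by simp
    also have "\<dots> = x \<otimes> (w \<otimes> z) \<otimes> x"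
    proof -
      have "x \<otimes> (w \<otimes> z) \<otimes> x = x \<otimes> w \<otimes> inv x \<otimes> (y \<otimes> x)"
        using xc yc wc z_def by (simp add: m_assoc)
      also have "\<dots> = x \<otimes> w \<otimes> inv x \<otimes> (x \<otimes> y)" using yx by simp
      also have "\<dots> = x \<otimes> w \<otimes> y" proof -
        have "inv x \<otimes> (x \<otimes> y) = y" using xc yc by (simp add: m_assoc[symmetric])
        then show ?thesis using xc yc wc by (simp add: m_assoc)
      qed
      finally show ?thesis by simp
    qed
    finally have "x \<otimes> (z \<otimes> w) \<otimes> x = x \<otimes> (w \<otimes> z) \<otimes> x" .
    then have "x \<otimes> (z \<otimes> w) = x \<otimes> (w \<otimes> z)" using xc zc wc by (simp del: right_cancel add: right_cancel[symmetric])
    then have "inv x \<otimes> (x \<otimes> (z \<otimes> w)) = inv x \<otimes> (x \<otimes> (w \<otimes> z))" by simp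
    then show ?thesis using xc zc wc by (simp add: m_assoc[symmetric])
  qed
  have gen: "g \<in> generate H (\<phi> ` M) \<Longrightarrow> z \<otimes> g = g \<otimes> z" for g
  proof (induction rule: generate.induct)
    case one then show ?case using zc by simp
  next
    case (incl h) then show ?case using zw by simp
  next
    case (inv h)
    have hc: "h \<in> carrier H" using inv car by auto
    have "z \<otimes> h = h \<otimes> z" using zw inv by simp
    then have "inv h \<otimes> (z \<otimes> h) \<otimes> inv h = inv h \<otimes> (h \<otimes> z) \<otimes> inv h" by simp
    then have e: "inv h \<otimes> z \<otimes> h = z" using hc zc by (simp add: m_assoc[symmetric])
    have "inv h \<otimes> z \<otimes> h \<otimes> inv h = z \<otimes> inv h" by (subst e) simp
    then show ?case using hc zc by (simp add: m_assoc)
  next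
    case (eng h1 h2)
    have "h1 \<in> carrier H" "h2 \<in> carrier H" using eng generate_in_carrier car by auto
    then show ?case using eng zc by (metis m_assoc)
  qed
  have zg: "z \<in> generate H (\<phi> ` M)"
    unfolding z_def x_def y_def using aM bM by (intro generate.eng generate.inv generate.incl) auto
  have "z \<in> {z \<in> generate H (\<phi> ` M). \<forall>g\<in>generate H (\<phi> ` M). z \<otimes> g = g \<otimes> z}"
    using zg gen by auto
  then have "z = \<one>" using tc unfolding trivial_center_def by blast
  then have "x \<otimes> (inv x \<otimes> y) = x" using xc by (simp add: z_def)
  then have "x = y" using xc yc by (simp add: m_assoc[symmetric])
  then show ?thesis using inj aM bM x_def y_def by (simp add: inj_on_def)
qed



definition mPM :: "'a::ring_1 set \<Rightarrow> 'a set \<Rightarrow> ('a \<Rightarrow> 'a) \<Rightarrow> bool" where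
  "mPM M T G \<longleftrightarrow> finite T \<and> T \<subseteq> M \<and> (\<forall>x. G x \<in> prime_subring) \<and> (\<forall>x. x \<notin> T \<longrightarrow> G x = 0)"

definition mev :: "'a::ring_1 set \<Rightarrow> ('a \<Rightarrow> 'a) \<Rightarrow> 'a" where
  "mev T G = (\<Sum>m\<in>T. G m * m)"

definition mformal :: "'i set \<Rightarrow> ('i \<Rightarrow> 'a::ring_1) \<Rightarrow> ('i \<Rightarrow> 'a \<Rightarrow> 'a) \<Rightarrow> 'a \<Rightarrow> 'a" where
  "mformal I c G x = (\<Sum>i\<in>I. c i * G i x)"

definition mrep :: "'a::ring_1 set \<Rightarrow> 'a set \<Rightarrow> 'i set \<Rightarrow> ('i \<Rightarrow> 'a) \<Rightarrow> ('i \<Rightarrow> 'a set) \<Rightarrow> ('i \<Rightarrow> 'a \<Rightarrow> 'a) \<Rightarrow> bool" where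
  "mrep M C I c T G \<longleftrightarrow> finite I \<and> (\<forall>i\<in>I. c i \<in> C \<and> mPM M (T i) (G i)) \<and> (\<Sum>i\<in>I. c i * mev (T i) (G i)) = 0"

definition mprod :: "'a::ring_1 set \<Rightarrow> ('a \<Rightarrow> 'a) \<Rightarrow> 'a \<Rightarrow> 'a set \<Rightarrow> ('a \<Rightarrow> 'a) \<Rightarrow> 'a \<Rightarrow> 'a" where
  "mprod T1 A u T2 B x = (\<Sum>p\<in>T1\<times>T2. if fst p * u * snd p = x then A (fst p) * B (snd p) else 0)"

definition mlead :: "('a \<Rightarrow> 'a \<Rightarrow> bool) \<Rightarrow> 'a set \<Rightarrow> ('a \<Rightarrow> 'a::ring_1) \<Rightarrow> 'a \<Rightarrow> bool" where
  "mlead lt T G a \<longleftrightarrow> a \<in> T \<and> G a \<noteq> 0 \<and> (\<forall>x\<in>T. G x \<noteq> 0 \<longrightarrow> x = a \<or> lt x a)"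

locale ctx =
  fixes M C :: "'a::ring_1 set" and lt :: "'a \<Rightarrow> 'a \<Rightarrow> bool"
  assumes M1: "1 \<in> M" and Mmul: "\<And>x y. x \<in> M \<Longrightarrow> y \<in> M \<Longrightarrow> x * y \<in> M"
    and C1: "1 \<in> C" and Cdiff: "\<And>x y. x \<in> C \<Longrightarrow> y \<in> C \<Longrightarrow> x - y \<in> C"
    and Cmul: "\<And>x y. x \<in> C \<Longrightarrow> y \<in> C \<Longrightarrow> x * y \<in> C"
    and inj1: "monoid_ring_injective prime_subring M"
    and nzd: "\<And>c f. c \<in> C \<Longrightarrow> f \<in> monoid_ring_image prime_subring M \<Longrightarrow> c * f = 0 \<Longrightarrow> c = 0 \<or> f = 0"
    and comm: "\<And>m c. m \<in> M \<Longrightarrow> c \<in> C \<Longrightarrow> m * c = c * m"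
    and irr: "\<And>x. x \<in> M \<Longrightarrow> \<not> lt x x"
    and trn: "\<And>x y z. x \<in> M \<Longrightarrow> y \<in> M \<Longrightarrow> z \<in> M \<Longrightarrow> lt x y \<Longrightarrow> lt y z \<Longrightarrow> lt x z"
    and tot: "\<And>x y. x \<in> M \<Longrightarrow> y \<in> M \<Longrightarrow> x \<noteq> y \<Longrightarrow> lt x y \<or> lt y x"
    and monl: "\<And>x y z. x \<in> M \<Longrightarrow> y \<in> M \<Longrightarrow> z \<in> M \<Longrightarrow> lt x y \<Longrightarrow> lt (z * x) (z * y)"
    and monr: "\<And>x y z. x \<in> M \<Longrightarrow> y \<in> M \<Longrightarrow> z \<in> M \<Longrightarrow> lt x y \<Longrightarrow> lt (x * z) (y * z)"
    and key: "\<And>a b. a \<in> M \<Longrightarrow> b \<in> M \<Longrightarrow> \<forall>u\<in>M. b * u * a = a * u * b \<Longrightarrow> a = b"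
begin

lemma C0: "0 \<in> C" using Cdiff[OF C1 C1] by simp
lemma Cneg: "x \<in> C \<Longrightarrow> - x \<in> C" using Cdiff[OF C0, of x] by simp
lemma Cadd: "x \<in> C \<Longrightarrow> y \<in> C \<Longrightarrow> x + y \<in> C" using Cdiff[of x "- y"] Cneg by simp
lemma Csum: "finite A \<Longrightarrow> (\<And>i. i \<in> A \<Longrightarrow> f i \<in> C) \<Longrightarrow> sum f A \<in> C"
  by (induction A rule: finite_induct) (auto simp: C0 Cadd)

lemma nat_C: "of_nat n \<in> C"
  by (induction n) (auto simp: C0 Cadd C1)

lemma P_C: "p \<in> prime_subring \<Longrightarrow> p \<in> C"
proof -
  assume "p \<in> prime_subring"
  then obtain n where p: "p = of_int n" unfolding prime_subring_def by auto
  show ?thesis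
  proof (cases "n \<ge> 0")
    case True
    then have "p = of_nat (nat n)" using p by simp
    then show ?thesis using nat_C by simp
  next
    case False
    then have "p = - of_nat (nat (- n))" using p by simp
    then show ?thesis using nat_C Cneg by simp
  qed
qed

lemma P_of_int: "of_int n \<in> prime_subring" unfolding prime_subring_def by simp
lemma P0: "0 \<in> prime_subring" using P_of_int[of 0] by simp
lemma P1: "1 \<in> prime_subring" using P_of_int[of 1] by simp
lemma Pdiff: "p \<in> prime_subring \<Longrightarrow> q \<in> prime_subring \<Longrightarrow> p - q \<in> prime_subring"
  unfolding prime_subring_def by (auto simp flip: of_int_diff)
lemma Padd: "p \<in> prime_subring \<Longrightarrow> q \<in> prime_subring \<Longrightarrow> p + q \<in> prime_subring"
  unfolding prime_subring_def by (auto simp flip: of_int_add)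
lemma Pmul: "p \<in> prime_subring \<Longrightarrow> q \<in> prime_subring \<Longrightarrow> p * q \<in> prime_subring"
  unfolding prime_subring_def by (auto simp flip: of_int_mult)
lemma Psum: "finite A \<Longrightarrow> (\<And>i. i \<in> A \<Longrightarrow> f i \<in> prime_subring) \<Longrightarrow> sum f A \<in> prime_subring"
  by (induction A rule: finite_induct) (auto simp: P0 Padd)
lemma Pcomm: "p \<in> prime_subring \<Longrightarrow> p * x = x * p"
  unfolding prime_subring_def by (auto simp: mult_of_int_commute)

lemma P_img: "p \<in> prime_subring \<Longrightarrow> p \<in> monoid_ring_image prime_subring M"
  unfolding monoid_ring_image_def
  by (rule CollectI, rule exI[of _ "{1}"], rule exI[of _ "\<lambda>_. p"]) (simp add: M1)

lemma nzdP: "c \<in> C \<Longrightarrow> p \<in> prime_subring \<Longrightarrow> p * c = 0 \<Longrightarrow> c = 0 \<or> p = 0"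
  using nzd[of c p] P_img Pcomm by metis

lemma Pdom: "(p::'a) \<in> prime_subring \<Longrightarrow> q \<in> prime_subring \<Longrightarrow> p \<noteq> 0 \<Longrightarrow> q \<noteq> 0 \<Longrightarrow> p * q \<noteq> 0"
  using nzd[of p q] P_img P_C by blast

lemma img_comm: "f \<in> monoid_ring_image prime_subring M \<Longrightarrow> c \<in> C \<Longrightarrow> f * c = c * f"
proof -
  assume f: "f \<in> monoid_ring_image prime_subring M" and c: "c \<in> C"
  then obtain S d where S: "finite S" "S \<subseteq> M" "d ` S \<subseteq> prime_subring" and fe: "f = (\<Sum>m\<in>S. d m * m)"
    unfolding monoid_ring_image_def by auto
  have "f * c = (\<Sum>m\<in>S. d m * m * c)" by (simp add: fe sum_distrib_right)
  also have "\<dots> = (\<Sum>m\<in>S. c * (d m * m))"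
  proof (rule sum.cong[OF refl])
    fix m assume m: "m \<in> S"
    have "d m * m * c = d m * (c * m)" using comm[of m c] m S c by (simp add: mult.assoc subset_eq)
    also have "\<dots> = c * (d m * m)" using Pcomm[of "d m" c] m S by (simp add: mult.assoc[symmetric] image_subset_iff)
    finally show "d m * m * c = c * (d m * m)" .
  qed
  also have "\<dots> = c * f" by (simp add: fe sum_distrib_left)
  finally show ?thesis .
qed

lemma mev_img: "mPM M T G \<Longrightarrow> mev T G \<in> monoid_ring_image prime_subring M"
  unfolding mPM_def mev_def monoid_ring_image_def
  by (rule CollectI, rule exI[of _ T], rule exI[of _ G]) auto

lemma mev_ext: "mPM M T G \<Longrightarrow> finite U \<Longrightarrow> T \<subseteq> U \<Longrightarrow> mev T G = (\<Sum>x\<in>U. G x * x)"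
  unfolding mev_def mPM_def by (rule sum.mono_neutral_left) auto

lemma mev_formal:
  assumes "finite I" "\<And>i. i \<in> I \<Longrightarrow> mPM M (T i) (G i)" "finite U" "\<And>i. i \<in> I \<Longrightarrow> T i \<subseteq> U"
  shows "(\<Sum>i\<in>I. c i * mev (T i) (G i)) = (\<Sum>x\<in>U. mformal I c G x * x)"
proof -
  have "(\<Sum>i\<in>I. c i * mev (T i) (G i)) = (\<Sum>i\<in>I. \<Sum>x\<in>U. c i * G i x * x)"
    using assms mev_ext by (simp add: sum_distrib_left mult.assoc)
  also have "\<dots> = (\<Sum>x\<in>U. \<Sum>i\<in>I. c i * G i x * x)" by (rule sum.swap)
  also have "\<dots> = (\<Sum>x\<in>U. mformal I c G x * x)" unfolding mformal_def by (simp add: sum_distrib_right)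
  finally show ?thesis .
qed

lemma formal_C: "mrep M C I c T G \<Longrightarrow> mformal I c G x \<in> C"
  unfolding mrep_def mformal_def mPM_def by (intro Csum Cmul) (auto intro: P_C)

lemma scale_rep:
  assumes r: "mrep M C I c T G" and fI': "finite I'"
    and c': "\<And>i. i \<in> I' \<Longrightarrow> c' i \<in> C" and G': "\<And>i. i \<in> I' \<Longrightarrow> mPM M (T' i) (G' i)"
    and p: "p \<in> prime_subring" and f: "\<And>x. mformal I' c' G' x = p * mformal I c G x"
  shows "mrep M C I' c' T' G'"
proof -
  define U where "U = (\<Union>i\<in>I. T i) \<union> (\<Union>i\<in>I'. T' i)"
  have fI: "finite I" and GI: "\<And>i. i \<in> I \<Longrightarrow> mPM M (T i) (G i)" and e: "(\<Sum>i\<in>I. c i * mev (T i) (G i)) = 0"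
    using r unfolding mrep_def by auto
  have fU: "finite U" unfolding U_def using fI fI' GI G' by (auto simp: mPM_def)
  have "(\<Sum>i\<in>I'. c' i * mev (T' i) (G' i)) = (\<Sum>x\<in>U. mformal I' c' G' x * x)"
    by (rule mev_formal[OF fI' G' fU]) (auto simp: U_def)
  also have "\<dots> = p * (\<Sum>x\<in>U. mformal I c G x * x)" by (simp add: f sum_distrib_left mult.assoc)
  also have "(\<Sum>x\<in>U. mformal I c G x * x) = (\<Sum>i\<in>I. c i * mev (T i) (G i))"
    by (rule mev_formal[OF fI GI fU, symmetric]) (auto simp: U_def)
  finally show ?thesis using e fI' c' G' unfolding mrep_def by simp
qed

end


context ctx begin

lemma mprod_PM:
  assumes A: "mPM M T1 A" and B: "mPM M T2 B" and u: "u \<in> M"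
  shows "mPM M ((\<lambda>p. fst p * u * snd p) ` (T1 \<times> T2)) (mprod T1 A u T2 B)"
proof -
  have f: "finite T1" "finite T2" and s: "T1 \<subseteq> M" "T2 \<subseteq> M" and v: "\<And>x. A x \<in> prime_subring" "\<And>x. B x \<in> prime_subring"
    using A B unfolding mPM_def by auto
  show ?thesis unfolding mPM_def
  proof (intro conjI allI impI)
    show "finite ((\<lambda>p. fst p * u * snd p) ` (T1 \<times> T2))" using f by simp
    show "(\<lambda>p. fst p * u * snd p) ` (T1 \<times> T2) \<subseteq> M" using s u by (auto intro!: Mmul)
    fix x
    show "mprod T1 A u T2 B x \<in> prime_subring" unfolding mprod_def
      using f by (intro Psum) (auto simp: P0 Pmul v)
  next
    fix x assume "x \<notin> (\<lambda>p. fst p * u * snd p) ` (T1 \<times> T2)"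
    then have "\<And>p. p \<in> T1 \<times> T2 \<Longrightarrow> fst p * u * snd p \<noteq> x" by blast
    then show "mprod T1 A u T2 B x = 0" unfolding mprod_def
      by (intro sum.neutral) simp
  qed
qed

lemma mprod_ev:
  assumes A: "mPM M T1 A" and B: "mPM M T2 B" and u: "u \<in> M" and U: "finite U"
    and sub: "(\<lambda>p. fst p * u * snd p) ` (T1 \<times> T2) \<subseteq> U"
  shows "(\<Sum>x\<in>U. mprod T1 A u T2 B x * x) = mev T1 A * u * mev T2 B"
proof -
  have f: "finite T1" "finite T2" and v: "\<And>x. A x \<in> prime_subring" "\<And>x. B x \<in> prime_subring"
    using A B unfolding mPM_def by auto
  have "(\<Sum>x\<in>U. mprod T1 A u T2 B x * x)
      = (\<Sum>x\<in>U. \<Sum>p\<in>T1\<times>T2. (if fst p * u * snd p = x then A (fst p) * B (snd p) else 0) * x)"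
    unfolding mprod_def by (simp add: sum_distrib_right)
  also have "\<dots> = (\<Sum>p\<in>T1\<times>T2. \<Sum>x\<in>U. (if fst p * u * snd p = x then A (fst p) * B (snd p) else 0) * x)"
    by (rule sum.swap)
  also have "\<dots> = (\<Sum>p\<in>T1\<times>T2. A (fst p) * B (snd p) * (fst p * u * snd p))"
  proof (rule sum.cong[OF refl])
    fix p assume p: "p \<in> T1 \<times> T2"
    have "(\<Sum>x\<in>U. (if fst p * u * snd p = x then A (fst p) * B (snd p) else 0) * x)
        = (\<Sum>x\<in>U. if fst p * u * snd p = x then A (fst p) * B (snd p) * x else 0)"
      by (rule sum.cong) auto
    also have "\<dots> = A (fst p) * B (snd p) * (fst p * u * snd p)"
    proof -
      have "fst p * u * snd p \<in> U" using sub p by auto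
      then show ?thesis using U by (simp add: sum.delta')
    qed
    finally show "(\<Sum>x\<in>U. (if fst p * u * snd p = x then A (fst p) * B (snd p) else 0) * x)
        = A (fst p) * B (snd p) * (fst p * u * snd p)" .
  qed
  also have "\<dots> = (\<Sum>m\<in>T1. \<Sum>n\<in>T2. A m * B n * (m * u * n))"
    by (simp add: sum.cartesian_product split_def)
  also have "\<dots> = (\<Sum>m\<in>T1. \<Sum>n\<in>T2. A m * m * u * (B n * n))"
  proof (intro sum.cong refl)
    fix m n
    have "A m * m * u * (B n * n) = A m * (m * u * B n) * n" by (simp add: mult.assoc)
    also have "m * u * B n = B n * (m * u)" using Pcomm[OF v(2)[of n]] by simp
    finally show "A m * B n * (m * u * n) = A m * m * u * (B n * n)" by (simp add: mult.assoc)
  qed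
  also have "\<dots> = mev T1 A * u * mev T2 B"
    unfolding mev_def by (simp add: sum_distrib_left sum_distrib_right, rule sum.swap)
  finally show ?thesis .
qed

lemma asym: "x \<in> M \<Longrightarrow> y \<in> M \<Longrightarrow> lt x y \<Longrightarrow> \<not> lt y x"
  using trn irr by blast

lemma max_exists: "finite X \<Longrightarrow> X \<noteq> {} \<Longrightarrow> X \<subseteq> M \<Longrightarrow> \<exists>a\<in>X. \<forall>x\<in>X. x = a \<or> lt x a"
proof (induction X rule: finite_ne_induct)
  case (singleton x) then show ?case by auto
next
  case (insert y X)
  then obtain a where a: "a \<in> X" "\<forall>x\<in>X. x = a \<or> lt x a" by auto
  have yM: "y \<in> M" and XM: "X \<subseteq> M" using insert by auto
  have aM: "a \<in> M" using a XM by auto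
  show ?case
  proof (cases "lt a y")
    case True
    have "\<forall>x\<in>insert y X. x = y \<or> lt x y"
    proof
      fix x assume x: "x \<in> insert y X"
      show "x = y \<or> lt x y"
      proof (cases "x = y")
        case False
        then have xX: "x \<in> X" using x by auto
        then have xM: "x \<in> M" using XM by auto
        show ?thesis
        proof (cases "x = a")
          case True then show ?thesis using \<open>lt a y\<close> by simp
        next
          case False
          then have "lt x a" using a xX by auto
          then show ?thesis using trn[OF xM aM yM] \<open>lt a y\<close> by simp
        qed
      qed simp
    qed
    then show ?thesis by auto
  next
    case False
    then have "y = a \<or> lt y a" using tot[OF yM aM] by auto
    then show ?thesis using a by auto
  qed
qed

lemma lead_exists: "mPM M T G \<Longrightarrow> G x0 \<noteq> 0 \<Longrightarrow> \<exists>a. mlead lt T G a"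
proof -
  assume P: "mPM M T G" and g: "G x0 \<noteq> 0"
  have x0: "x0 \<in> T" using P g unfolding mPM_def by auto
  have "\<exists>a\<in>{x\<in>T. G x \<noteq> 0}. \<forall>x\<in>{x\<in>T. G x \<noteq> 0}. x = a \<or> lt x a"
    using P x0 g unfolding mPM_def by (intro max_exists) auto
  then show ?thesis unfolding mlead_def by auto
qed

lemma lead_unique: "mPM M T G \<Longrightarrow> mlead lt T G a \<Longrightarrow> mlead lt T G b \<Longrightarrow> a = b"
proof -
  assume P: "mPM M T G" and la: "mlead lt T G a" and lb: "mlead lt T G b"
  have aT: "a \<in> T" "G a \<noteq> 0" and bT: "b \<in> T" "G b \<noteq> 0" using la lb unfolding mlead_def by auto
  have aM: "a \<in> M" and bM: "b \<in> M" using P aT bT unfolding mPM_def by auto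
  have 1: "a = b \<or> lt a b" using lb aT unfolding mlead_def by auto
  have 2: "b = a \<or> lt b a" using la bT unfolding mlead_def by auto
  show "a = b" using 1 2 asym[OF aM bM] by auto
qed

lemma lead_strict:
  assumes m: "m \<in> M" and n: "n \<in> M" and a: "a \<in> M" and b: "b \<in> M" and u: "u \<in> M"
    and ma: "m = a \<or> lt m a" and nb: "n = b \<or> lt n b" and ne: "(m, n) \<noteq> (a, b)"
  shows "lt (m * u * n) (a * u * b)"
proof (cases "m = a")
  case True
  then have "lt n b" using nb ne by auto
  then show ?thesis using monl[OF n b Mmul[OF a u]] True by (simp add: mult.assoc)
next
  case False
  then have "lt m a" using ma by auto
  then have "lt (m * u) (a * u)" using monr[OF m a u] by simp
  then have 1: "lt (m * u * n) (a * u * n)" using monr[OF Mmul[OF m u] Mmul[OF a u] n] by simp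
  show ?thesis
  proof (cases "n = b")
    case True then show ?thesis using 1 by simp
  next
    case False
    then have "lt (a * u * n) (a * u * b)" using nb monl[OF n b Mmul[OF a u]] by (simp add: mult.assoc)
    then show ?thesis using 1 trn[OF Mmul[OF Mmul[OF m u] n] Mmul[OF Mmul[OF a u] n] Mmul[OF Mmul[OF a u] b]] by simp
  qed
qed

lemma mprod_lead:
  assumes A: "mPM M T1 A" and B: "mPM M T2 B" and u: "u \<in> M"
    and la: "mlead lt T1 A a" and lb: "mlead lt T2 B b" and x: "x \<in> M" and nx: "\<not> lt x (a * u * b)"
  shows "mprod T1 A u T2 B x = (if x = a * u * b then A a * B b else 0)"
proof -
  have f: "finite T1" "finite T2" and s: "T1 \<subseteq> M" "T2 \<subseteq> M"
    using A B unfolding mPM_def by auto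
  have aT: "a \<in> T1" and bT: "b \<in> T2" using la lb unfolding mlead_def by auto
  have "mprod T1 A u T2 B x = (\<Sum>p\<in>T1\<times>T2. if p = (a, b) then (if x = a * u * b then A a * B b else 0) else 0)"
    unfolding mprod_def
  proof (rule sum.cong[OF refl])
    fix p assume p: "p \<in> T1 \<times> T2"
    obtain m n where pmn: "p = (m, n)" by (cases p)
    have mT: "m \<in> T1" and nT: "n \<in> T2" using p pmn by auto
    show "(if fst p * u * snd p = x then A (fst p) * B (snd p) else 0) =
          (if p = (a, b) then if x = a * u * b then A a * B b else 0 else 0)"
    proof (cases "p = (a, b)")
      case True then show ?thesis by auto
    next
      case False
      show ?thesis
      proof (cases "A m = 0 \<or> B n = 0")
        case True then show ?thesis using False pmn by auto
      next
        case nz: False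
        have "m = a \<or> lt m a" using la mT nz unfolding mlead_def by auto
        moreover have "n = b \<or> lt n b" using lb nT nz unfolding mlead_def by auto
        ultimately have "lt (m * u * n) (a * u * b)"
          using lead_strict[of m n a b u] mT nT aT bT s u False pmn by auto
        then have "m * u * n \<noteq> x" using nx by auto
        then show ?thesis using False pmn by auto
      qed
    qed
  qed
  also have "\<dots> = (if x = a * u * b then A a * B b else 0)"
    using aT bT f by (simp add: sum.delta)
  finally show ?thesis .
qed

end


context ctx begin

definition smallc :: "nat \<Rightarrow> bool" where
  "smallc n \<longleftrightarrow> (\<forall>(I'::'a set) c' T' G' x. mrep M C I' c' T' G' \<and> card I' < n \<longrightarrow> mformal I' c' G' x = 0)"

lemma PM_lin:
  assumes A: "mPM M T1 A" and B: "mPM M T2 B" and p: "p \<in> prime_subring" and q: "q \<in> prime_subring"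
  shows "mPM M (T1 \<union> T2) (\<lambda>x. p * A x - q * B x)"
  using A B unfolding mPM_def by (auto intro!: Pdiff Pmul p q)

lemma PM_scale:
  assumes A: "mPM M T1 A" and p: "p \<in> prime_subring"
  shows "mPM M T1 (\<lambda>x. p * A x)"
  using A unfolding mPM_def by (auto intro!: Pmul p)

lemma L_drop:
  fixes I :: "'a set"
  assumes r: "mrep M C I c T G"
    and sm: "smallc (card I)"
    and x0: "mformal I c G x0 \<noteq> 0" and j: "j \<in> I"
  shows "\<exists>x. G j x \<noteq> 0"
proof (rule ccontr)
  assume "\<not> ?thesis" then have z: "\<And>x. G j x = 0" by auto
  have fI: "finite I" and cI: "\<forall>i\<in>I. c i \<in> C \<and> mPM M (T i) (G i)"
    and e: "(\<Sum>i\<in>I. c i * mev (T i) (G i)) = 0" using r unfolding mrep_def by auto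
  have ev0: "mev (T j) (G j) = 0" unfolding mev_def by (simp add: z)
  have "(\<Sum>i\<in>I. c i * mev (T i) (G i)) = c j * mev (T j) (G j) + (\<Sum>i\<in>I - {j}. c i * mev (T i) (G i))"
    using fI j by (rule sum.remove)
  then have "(\<Sum>i\<in>I - {j}. c i * mev (T i) (G i)) = 0" using e ev0 by simp
  then have r': "mrep M C (I - {j}) c T G" using fI cI unfolding mrep_def by auto
  have "card (I - {j}) < card I" using fI j by (rule card_Diff1_less)
  then have f0: "mformal (I - {j}) c G x0 = 0" using sm r' unfolding smallc_def by blast
  have "mformal I c G x0 = c j * G j x0 + mformal (I - {j}) c G x0"
    unfolding mformal_def using fI j by (rule sum.remove)
  then show False using x0 f0 z by simp
qed

lemma L_indep:
  fixes I :: "'a set"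
  assumes r: "mrep M C I c T G"
    and sm: "smallc (card I)"
    and x0: "mformal I c G x0 \<noteq> 0"
    and p: "\<And>i. i \<in> I \<Longrightarrow> p i \<in> prime_subring" and s: "(\<Sum>i\<in>I. p i * c i) = 0" and j: "j \<in> I"
  shows "p j = 0"
proof (rule ccontr)
  assume pj: "p j \<noteq> 0"
  have fI: "finite I" and cI: "\<And>i. i \<in> I \<Longrightarrow> c i \<in> C" and GI: "\<And>i. i \<in> I \<Longrightarrow> mPM M (T i) (G i)"
    using r unfolding mrep_def by auto
  define G' where "G' = (\<lambda>i x. p j * G i x - p i * G j x)"
  define T' where "T' = (\<lambda>i. T i \<union> T j)"
  have PM': "mPM M (T' i) (G' i)" if "i \<in> I" for i
    unfolding G'_def T'_def using PM_lin[OF GI[OF that] GI[OF j] p[OF j] p[OF that]] by simp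
  have form: "mformal (I - {j}) c G' x = p j * mformal I c G x" for x
  proof -
    have "mformal I c G' x = c j * G' j x + mformal (I - {j}) c G' x"
      unfolding mformal_def using fI j by (rule sum.remove)
    then have "mformal (I - {j}) c G' x = mformal I c G' x" by (simp add: G'_def)
    also have "\<dots> = (\<Sum>i\<in>I. p j * (c i * G i x) - p i * c i * G j x)"
      unfolding mformal_def
    proof (rule sum.cong[OF refl])
      fix i assume i: "i \<in> I"
      have 1: "c i * p j = p j * c i" using Pcomm[OF p[OF j]] by simp
      have 2: "c i * p i = p i * c i" using Pcomm[OF p[OF i]] by simp
      have "c i * G' i x = c i * p j * G i x - c i * p i * G j x"
        unfolding G'_def by (simp add: right_diff_distrib mult.assoc)
      also have "\<dots> = p j * (c i * G i x) - p i * c i * G j x" by (simp add: 1 2 mult.assoc)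
      finally show "c i * G' i x = p j * (c i * G i x) - p i * c i * G j x" .
    qed
    also have "\<dots> = p j * mformal I c G x - (\<Sum>i\<in>I. p i * c i) * G j x"
      unfolding mformal_def by (simp add: sum_subtractf sum_distrib_left sum_distrib_right)
    also have "\<dots> = p j * mformal I c G x" using s by simp
    finally show ?thesis .
  qed
  have r': "mrep M C (I - {j}) c T' G'"
    by (rule scale_rep[OF r _ _ _ p[OF j] form]) (use fI cI PM' in auto)
  have "card (I - {j}) < card I" using fI j by (rule card_Diff1_less)
  then have "mformal (I - {j}) c G' x0 = 0" using sm r' unfolding smallc_def by blast
  then have "p j * mformal I c G x0 = 0" using form by simp
  then show False using nzdP[OF formal_C[OF r] p[OF j]] x0 pj by simp
qed

end


context ctx begin

lemma L_comm:
  fixes I :: "'a set"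
  assumes r: "mrep M C I c T G"
    and sm: "smallc (card I)"
    and x0: "mformal I c G x0 \<noteq> 0"
    and i0: "i0 \<in> I" and i: "i \<in> I" and ne: "i \<noteq> i0" and u: "u \<in> M"
  shows "mprod (T i) (G i) u (T i0) (G i0) x = mprod (T i0) (G i0) u (T i) (G i) x"
proof -
  have fI: "finite I" and cI: "\<And>i. i \<in> I \<Longrightarrow> c i \<in> C" and GI: "\<And>i. i \<in> I \<Longrightarrow> mPM M (T i) (G i)"
    and e: "(\<Sum>i\<in>I. c i * mev (T i) (G i)) = 0"
    using r unfolding mrep_def by auto
  define L where "L = (\<lambda>k. mprod (T k) (G k) u (T i0) (G i0))"
  define R where "R = (\<lambda>k. mprod (T i0) (G i0) u (T k) (G k))"
  define S1 where "S1 = (\<lambda>k. (\<lambda>p. fst p * u * snd p) ` (T k \<times> T i0))"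
  define S2 where "S2 = (\<lambda>k. (\<lambda>p. fst p * u * snd p) ` (T i0 \<times> T k))"
  define S where "S = (\<lambda>k. S1 k \<union> S2 k)"
  define G' where "G' = (\<lambda>k y. L k y - R k y)"
  define ev where "ev = (\<lambda>k. mev (T k) (G k))"
  have PL: "mPM M (S1 k) (L k)" if "k \<in> I" for k
    unfolding S1_def L_def by (rule mprod_PM[OF GI[OF that] GI[OF i0] u])
  have PR: "mPM M (S2 k) (R k)" if "k \<in> I" for k
    unfolding S2_def R_def by (rule mprod_PM[OF GI[OF i0] GI[OF that] u])
  have PM': "mPM M (S k) (G' k)" if "k \<in> I" for k
    using PM_lin[OF PL[OF that] PR[OF that] P1 P1] unfolding S_def G'_def by simp
  have evk: "mev (S k) (G' k) = ev k * u * ev i0 - ev i0 * u * ev k" if k: "k \<in> I" for k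
  proof -
    have fS: "finite (S k)" using PM'[OF k] unfolding mPM_def by simp
    have "mev (S k) (G' k) = (\<Sum>y\<in>S k. L k y * y) - (\<Sum>y\<in>S k. R k y * y)"
      unfolding mev_def G'_def by (simp add: left_diff_distrib sum_subtractf)
    also have "(\<Sum>y\<in>S k. L k y * y) = ev k * u * ev i0"
      unfolding L_def ev_def by (rule mprod_ev[OF GI[OF k] GI[OF i0] u fS]) (auto simp: S_def S1_def)
    also have "(\<Sum>y\<in>S k. R k y * y) = ev i0 * u * ev k"
      unfolding R_def ev_def by (rule mprod_ev[OF GI[OF i0] GI[OF k] u fS]) (auto simp: S_def S2_def)
    finally show ?thesis .
  qed
  have "(\<Sum>k\<in>I. c k * (ev k * u * ev i0 - ev i0 * u * ev k))
      = c i0 * (ev i0 * u * ev i0 - ev i0 * u * ev i0) + (\<Sum>k\<in>I - {i0}. c k * (ev k * u * ev i0 - ev i0 * u * ev k))"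
    using fI i0 by (rule sum.remove)
  then have "(\<Sum>k\<in>I - {i0}. c k * mev (S k) (G' k)) = (\<Sum>k\<in>I. c k * (ev k * u * ev i0 - ev i0 * u * ev k))"
    using evk by simp
  also have "\<dots> = (\<Sum>k\<in>I. c k * ev k * u * ev i0 - ev i0 * u * (c k * ev k))"
  proof (rule sum.cong[OF refl])
    fix k assume k: "k \<in> I"
    have 1: "c k * ev i0 = ev i0 * c k" using img_comm[OF mev_img[OF GI[OF i0]] cI[OF k]] by (simp add: ev_def)
    have 2: "c k * u = u * c k" using comm[OF u cI[OF k]] by simp
    have "c k * (ev i0 * u * ev k) = ev i0 * u * (c k * ev k)"
      by (simp add: mult.assoc[symmetric] 1) (simp add: mult.assoc 2[symmetric])
    then show "c k * (ev k * u * ev i0 - ev i0 * u * ev k) = c k * ev k * u * ev i0 - ev i0 * u * (c k * ev k)"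
      by (simp add: right_diff_distrib mult.assoc)
  qed
  also have "\<dots> = (\<Sum>k\<in>I. c k * ev k) * u * ev i0 - ev i0 * u * (\<Sum>k\<in>I. c k * ev k)"
    by (simp add: sum_subtractf sum_distrib_left sum_distrib_right)
  also have "\<dots> = 0" using e by (simp add: ev_def)
  finally have e': "(\<Sum>k\<in>I - {i0}. c k * mev (S k) (G' k)) = 0" .
  have r': "mrep M C (I - {i0}) c S G'" using fI cI PM' e' unfolding mrep_def by auto
  have "card (I - {i0}) < card I" using fI i0 by (rule card_Diff1_less)
  then have f0: "mformal (I - {i0}) c G' y = 0" for y using sm r' unfolding smallc_def by blast
  define p where "p = (\<lambda>k. if k = i0 then 0 else G' k x)"
  have pP: "p k \<in> prime_subring" if "k \<in> I" for k
    using PM'[OF that] P0 unfolding p_def mPM_def by auto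
  have "(\<Sum>k\<in>I. p k * c k) = p i0 * c i0 + (\<Sum>k\<in>I - {i0}. p k * c k)"
    using fI i0 by (rule sum.remove)
  also have "\<dots> = (\<Sum>k\<in>I - {i0}. c k * G' k x)"
  proof -
    have "p k * c k = c k * G' k x" if k: "k \<in> I - {i0}" for k
    proof -
      have "G' k x \<in> prime_subring" using pP[of k] k by (simp add: p_def)
      then show ?thesis using k by (simp add: p_def Pcomm)
    qed
    then show ?thesis by (simp add: p_def)
  qed
  also have "\<dots> = 0" using f0[of x] unfolding mformal_def .
  finally have sp: "(\<Sum>k\<in>I. p k * c k) = 0" .
  have "p i = 0" by (rule L_indep[OF r sm x0, where p=p and j=i]) (use pP i sp in auto)
  then show ?thesis using ne by (simp add: p_def G'_def L_def R_def)
qed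

lemma L_lead:
  fixes I :: "'a set"
  assumes r: "mrep M C I c T G"
    and sm: "smallc (card I)"
    and x0: "mformal I c G x0 \<noteq> 0"
    and i0: "i0 \<in> I" and i: "i \<in> I"
    and la: "mlead lt (T i0) (G i0) a" and lb: "mlead lt (T i) (G i) b"
  shows "a = b"
proof (cases "i = i0")
  case True
  then show ?thesis using lead_unique la lb r i0 unfolding mrep_def by blast
next
  case ne: False
  have GI: "\<And>i. i \<in> I \<Longrightarrow> mPM M (T i) (G i)" using r unfolding mrep_def by auto
  have aT: "a \<in> T i0" "G i0 a \<noteq> 0" and bT: "b \<in> T i" "G i b \<noteq> 0" using la lb unfolding mlead_def by auto
  have aM: "a \<in> M" and bM: "b \<in> M" using GI[OF i0] GI[OF i] aT bT unfolding mPM_def by auto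
  have aP: "G i0 a \<in> prime_subring" and bP: "G i b \<in> prime_subring" using GI[OF i0] GI[OF i] unfolding mPM_def by auto
  have ab: "G i0 a * G i b \<noteq> 0" and ba: "G i b * G i0 a \<noteq> 0" using Pdom aP bP aT bT by auto
  show ?thesis
  proof (rule key[OF aM bM], rule ballI, rule ccontr)
    fix u assume u: "u \<in> M" and neq: "b * u * a \<noteq> a * u * b"
    have buaM: "b * u * a \<in> M" and aubM: "a * u * b \<in> M" using Mmul aM bM u by auto
    have cm: "\<And>x. mprod (T i) (G i) u (T i0) (G i0) x = mprod (T i0) (G i0) u (T i) (G i) x"
      using L_comm[OF r sm x0 i0 i ne u] .
    have l1: "\<And>x. x \<in> M \<Longrightarrow> \<not> lt x (b * u * a) \<Longrightarrow> mprod (T i) (G i) u (T i0) (G i0) x = (if x = b * u * a then G i b * G i0 a else 0)"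
      using mprod_lead[OF GI[OF i] GI[OF i0] u lb la] .
    have l2: "\<And>x. x \<in> M \<Longrightarrow> \<not> lt x (a * u * b) \<Longrightarrow> mprod (T i0) (G i0) u (T i) (G i) x = (if x = a * u * b then G i0 a * G i b else 0)"
      using mprod_lead[OF GI[OF i0] GI[OF i] u la lb] .
    from tot[OF buaM aubM neq] show False
    proof
      assume lt1: "lt (b * u * a) (a * u * b)"
      have "\<not> lt (a * u * b) (b * u * a)" using asym[OF buaM aubM lt1] .
      then have "mprod (T i) (G i) u (T i0) (G i0) (a * u * b) = 0" using l1[OF aubM] neq by auto
      moreover have "mprod (T i0) (G i0) u (T i) (G i) (a * u * b) = G i0 a * G i b" using l2[OF aubM] irr[OF aubM] by auto
      ultimately show False using cm ab by metis
    next
      assume lt1: "lt (a * u * b) (b * u * a)"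
      have "\<not> lt (b * u * a) (a * u * b)" using asym[OF aubM buaM lt1] .
      then have "mprod (T i0) (G i0) u (T i) (G i) (b * u * a) = 0" using l2[OF buaM] neq by auto
      moreover have "mprod (T i) (G i) u (T i0) (G i0) (b * u * a) = G i b * G i0 a" using l1[OF buaM] irr[OF buaM] by auto
      ultimately show False using cm ba by metis
    qed
  qed
qed

end


context ctx begin

lemma L_false:
  fixes I :: "'a set"
  assumes r: "mrep M C I c T G" and sm: "smallc (card I)" and x0: "mformal I c G x0 \<noteq> 0"
  shows False
proof -
  have fI: "finite I" and cI: "\<And>i. i \<in> I \<Longrightarrow> c i \<in> C" and GI: "\<And>i. i \<in> I \<Longrightarrow> mPM M (T i) (G i)"
    and e: "(\<Sum>i\<in>I. c i * mev (T i) (G i)) = 0"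
    using r unfolding mrep_def by auto
  consider "card I = 0" | "card I = 1" | "card I \<ge> 2" by arith
  then show False
  proof cases
    case 1
    then have "I = {}" using fI by simp
    then show False using x0 unfolding mformal_def by simp
  next
    case 2
    then obtain j where Ij: "I = {j}" by (rule card_1_singletonE)
    have j: "j \<in> I" using Ij by simp
    have "c j * mev (T j) (G j) = 0" using e Ij by simp
    then have "c j = 0 \<or> mev (T j) (G j) = 0" using nzd[OF cI[OF j] mev_img[OF GI[OF j]]] by simp
    then show False
    proof
      assume "c j = 0"
      then show False using x0 Ij unfolding mformal_def by simp
    next
      assume ev0: "mev (T j) (G j) = 0"
      have PMj: "finite (T j)" "T j \<subseteq> M" "\<forall>x. G j x \<in> prime_subring" "\<forall>x. x \<notin> T j \<longrightarrow> G j x = 0"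
        using GI[OF j] unfolding mPM_def by auto
      have "\<forall>m\<in>T j. G j m = 0"
        using inj1 PMj ev0 unfolding monoid_ring_injective_def mev_def by blast
      then have "\<And>x. G j x = 0" using PMj by metis
      then show False using L_drop[OF r sm x0 j] by simp
    qed
  next
    case 3
    then have "I \<noteq> {}" by auto
    then obtain i0 where i0: "i0 \<in> I" by auto
    have "card (I - {i0}) \<ge> 1" using 3 fI i0 by simp
    then have "I - {i0} \<noteq> {}" by (metis card.empty not_one_le_zero)
    then obtain i1 where i1: "i1 \<in> I" and ne: "i1 \<noteq> i0" by auto
    obtain x1 where "G i0 x1 \<noteq> 0" using L_drop[OF r sm x0 i0] by auto
    then obtain a where la: "mlead lt (T i0) (G i0) a" using lead_exists[OF GI[OF i0]] by auto
    have Ga: "G i a \<noteq> 0" if i: "i \<in> I" for i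
    proof -
      obtain y where "G i y \<noteq> 0" using L_drop[OF r sm x0 i] by auto
      then obtain b where lb: "mlead lt (T i) (G i) b" using lead_exists[OF GI[OF i]] by auto
      have "a = b" using L_lead[OF r sm x0 i0 i la lb] .
      then show ?thesis using lb unfolding mlead_def by simp
    qed
    define \<alpha>0 where "\<alpha>0 = G i0 a"
    define \<alpha>1 where "\<alpha>1 = G i1 a"
    have a0P: "\<alpha>0 \<in> prime_subring" and a1P: "\<alpha>1 \<in> prime_subring"
      using GI[OF i0] GI[OF i1] unfolding mPM_def \<alpha>0_def \<alpha>1_def by auto
    have a0nz: "\<alpha>0 \<noteq> 0" using Ga[OF i0] \<alpha>0_def by simp
    define c' where "c' = (\<lambda>i. if i = i0 then \<alpha>0 * c i0 + \<alpha>1 * c i1 else c i)"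
    define G' where "G' = (\<lambda>i. if i = i0 then G i0 else if i = i1 then (\<lambda>x. \<alpha>0 * G i1 x - \<alpha>1 * G i0 x) else (\<lambda>x. \<alpha>0 * G i x))"
    define T' where "T' = (\<lambda>i. if i = i1 then T i1 \<union> T i0 else T i)"
    have PM': "mPM M (T' i) (G' i)" if i: "i \<in> I" for i
    proof -
      consider "i = i0" | "i = i1" | "i \<noteq> i0 \<and> i \<noteq> i1" by blast
      then show ?thesis
      proof cases
        case 1 then show ?thesis using GI[OF i0] ne by (simp add: T'_def G'_def)
      next
        case 2 then show ?thesis using PM_lin[OF GI[OF i1] GI[OF i0] a0P a1P] ne by (simp add: T'_def G'_def)
      next
        case 3 then show ?thesis using PM_scale[OF GI[OF i] a0P] by (simp add: T'_def G'_def)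
      qed
    qed
    have c'C: "c' i \<in> C" if i: "i \<in> I" for i
      using cI[OF i] cI[OF i0] cI[OF i1] P_C[OF a0P] P_C[OF a1P] unfolding c'_def by (auto intro!: Cadd Cmul)
    have form: "mformal I c' G' x = \<alpha>0 * mformal I c G x" for x
    proof -
      define e1 where "e1 = \<alpha>1 * c i1 * G i0 x"
      have tm: "c' i * G' i x = \<alpha>0 * (c i * G i x) + ((if i = i0 then e1 else 0) + (if i = i1 then - e1 else 0))" for i
      proof -
        consider "i = i0" | "i = i1" | "i \<noteq> i0 \<and> i \<noteq> i1" by blast
        then show ?thesis
        proof cases
          case 1 then show ?thesis using ne by (simp add: c'_def G'_def e1_def distrib_right mult.assoc)
        next
          case 2
          have cm: "c i1 * \<alpha>0 = \<alpha>0 * c i1" "c i1 * \<alpha>1 = \<alpha>1 * c i1" using Pcomm[OF a0P] Pcomm[OF a1P] by simp_all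
          have "c i1 * (\<alpha>0 * G i1 x - \<alpha>1 * G i0 x) = c i1 * \<alpha>0 * G i1 x - c i1 * \<alpha>1 * G i0 x"
            by (simp add: right_diff_distrib mult.assoc)
          also have "\<dots> = \<alpha>0 * (c i1 * G i1 x) - e1" by (simp add: cm e1_def mult.assoc)
          finally show ?thesis using 2 ne by (simp add: c'_def G'_def)
        next
          case 3
          have cm: "c i * \<alpha>0 = \<alpha>0 * c i" using Pcomm[OF a0P] by simp
          show ?thesis using 3 by (simp add: c'_def G'_def mult.assoc[symmetric] cm)
        qed
      qed
      have "mformal I c' G' x = (\<Sum>i\<in>I. \<alpha>0 * (c i * G i x)) + ((\<Sum>i\<in>I. if i = i0 then e1 else 0) + (\<Sum>i\<in>I. if i = i1 then - e1 else 0))"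
        unfolding mformal_def tm by (simp add: sum.distrib)
      also have "\<dots> = \<alpha>0 * mformal I c G x" using fI i0 i1 unfolding mformal_def
        by (simp add: sum.delta sum_distrib_left)
      finally show ?thesis .
    qed
    have r': "mrep M C I c' T' G'"
      by (rule scale_rep[OF r fI c'C PM' a0P form])
    have x0': "mformal I c' G' x0 \<noteq> 0"
      using form[of x0] nzdP[OF formal_C[OF r] a0P] x0 a0nz by auto
    obtain y where "G' i1 y \<noteq> 0" using L_drop[OF r' sm x0' i1] by auto
    then obtain b where lb: "mlead lt (T' i1) (G' i1) b" using lead_exists[OF PM'[OF i1]] by auto
    have la': "mlead lt (T' i0) (G' i0) a" using la ne by (simp add: T'_def G'_def)
    have "a = b" using L_lead[OF r' sm x0' i0 i1 la' lb] .
    then have "G' i1 a \<noteq> 0" using lb unfolding mlead_def by simp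
    moreover have "G' i1 a = \<alpha>0 * \<alpha>1 - \<alpha>1 * \<alpha>0" using ne by (simp add: G'_def \<alpha>0_def \<alpha>1_def)
    moreover have "\<alpha>0 * \<alpha>1 = \<alpha>1 * \<alpha>0" using Pcomm[OF a0P] by simp
    ultimately show False by simp
  qed
qed

end



theorem lemma2p1:
  fixes M C :: "'a::ring_1 set"
    and H :: "'h monoid" and \<phi> :: "'a \<Rightarrow> 'h"
  assumes "is_submonoid M" and "M \<subseteq> units_of_ring"
    and "is_subring C"
    and "monoid_ring_injective prime_subring M"
    and "\<forall>c\<in>C. \<forall>f\<in>monoid_ring_image prime_subring M. c * f = 0 \<longrightarrow> c = 0 \<or> f = 0"
    and "\<forall>m\<in>M. \<forall>c\<in>C. m * c = c * m"
    and "orderable_monoid M"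
    and "group H" and "monoid_embedding M H \<phi>"
    and "trivial_center H (generate H (\<phi> ` M))"
  shows "monoid_ring_injective C M"
proof -
  note sm = assms(1) and sr = assms(3) and inj = assms(4) and nz = assms(5) and cm = assms(6)
  obtain lt :: "'a \<Rightarrow> 'a \<Rightarrow> bool" where
    o1: "\<forall>x\<in>M. \<not> lt x x" and
    o2: "\<forall>x\<in>M. \<forall>y\<in>M. \<forall>z\<in>M. lt x y \<longrightarrow> lt y z \<longrightarrow> lt x z" and
    o3: "\<forall>x\<in>M. \<forall>y\<in>M. x \<noteq> y \<longrightarrow> lt x y \<or> lt y x" and
    o4: "\<forall>x\<in>M. \<forall>y\<in>M. \<forall>z\<in>M. lt x y \<longrightarrow> lt (z * x) (z * y) \<and> lt (x * z) (y * z)"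
    using assms(7) unfolding orderable_monoid_def by blast
  interpret ctx M C lt
  proof
    show "1 \<in> M" using sm unfolding is_submonoid_def by simp
    show "\<And>x y. x \<in> M \<Longrightarrow> y \<in> M \<Longrightarrow> x * y \<in> M" using sm unfolding is_submonoid_def by simp
    show "1 \<in> C" using sr unfolding is_subring_def by simp
    show "\<And>x y. x \<in> C \<Longrightarrow> y \<in> C \<Longrightarrow> x - y \<in> C" using sr unfolding is_subring_def by simp
    show "\<And>x y. x \<in> C \<Longrightarrow> y \<in> C \<Longrightarrow> x * y \<in> C" using sr unfolding is_subring_def by simp
    show "monoid_ring_injective prime_subring M" by (rule inj)
    show "\<And>c f. c \<in> C \<Longrightarrow> f \<in> monoid_ring_image prime_subring M \<Longrightarrow> c * f = 0 \<Longrightarrow> c = 0 \<or> f = 0"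
      using nz by blast
    show "\<And>m c. m \<in> M \<Longrightarrow> c \<in> C \<Longrightarrow> m * c = c * m" using cm by blast
    show "\<And>x. x \<in> M \<Longrightarrow> \<not> lt x x" using o1 by blast
    show "\<And>x y z. x \<in> M \<Longrightarrow> y \<in> M \<Longrightarrow> z \<in> M \<Longrightarrow> lt x y \<Longrightarrow> lt y z \<Longrightarrow> lt x z" using o2 by blast
    show "\<And>x y. x \<in> M \<Longrightarrow> y \<in> M \<Longrightarrow> x \<noteq> y \<Longrightarrow> lt x y \<or> lt y x" using o3 by blast
    show "\<And>x y z. x \<in> M \<Longrightarrow> y \<in> M \<Longrightarrow> z \<in> M \<Longrightarrow> lt x y \<Longrightarrow> lt (z * x) (z * y)" using o4 by blast
    show "\<And>x y z. x \<in> M \<Longrightarrow> y \<in> M \<Longrightarrow> z \<in> M \<Longrightarrow> lt x y \<Longrightarrow> lt (x * z) (y * z)" using o4 by blast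
    show "\<And>a b. a \<in> M \<Longrightarrow> b \<in> M \<Longrightarrow> \<forall>u\<in>M. b * u * a = a * u * b \<Longrightarrow> a = b"
      using key_group[OF assms(8) assms(9) assms(10) sm] by blast
  qed
  show ?thesis unfolding monoid_ring_injective_def
  proof (intro allI impI ballI, rule ccontr)
    fix S c m0
    assume fS: "finite S" and SM: "S \<subseteq> M" and cS: "c ` S \<subseteq> C" and s0: "(\<Sum>m\<in>S. c m * m) = 0"
      and m0: "m0 \<in> S" and nz0: "c m0 \<noteq> 0"
    define G where "G = (\<lambda>(i::'a) (x::'a). if x = i then (1::'a) else 0)"
    define T where "T = (\<lambda>(i::'a). {i})"
    have PMi: "mPM M (T i) (G i)" if "i \<in> S" for i
      using that SM P0 P1 unfolding mPM_def T_def G_def by auto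
    have evi: "mev (T i) (G i) = i" for i unfolding mev_def T_def G_def by simp
    have r: "mrep M C S c T G" unfolding mrep_def using fS cS PMi s0 evi by auto
    have "(\<Sum>i\<in>S. c i * G i m0) = (\<Sum>i\<in>S. if m0 = i then c i else 0)"
      unfolding G_def by (rule sum.cong) auto
    also have "\<dots> = c m0" using fS m0 by (simp add: sum.delta)
    finally have f0: "mformal S c G m0 \<noteq> 0" unfolding mformal_def using nz0 by simp
    define Bad where "Bad = (\<lambda>n. \<exists>(I::'a set) c T G. card I = n \<and> mrep M C I c T G \<and> (\<exists>x. mformal I c G x \<noteq> 0))"
    have "Bad (card S)" unfolding Bad_def using r f0 by blast
    then have "Bad (LEAST n. Bad n)" by (rule LeastI)
    then obtain I :: "'a set" and c' T' G' x where cI: "card I = (LEAST n. Bad n)" and r': "mrep M C I c' T' G'"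
      and x: "mformal I c' G' x \<noteq> 0" unfolding Bad_def by blast
    have "smallc (card I)" unfolding smallc_def
    proof (intro allI impI, rule ccontr)
      fix I' :: "'a set" and c'' T'' G'' y
      assume h: "mrep M C I' c'' T'' G'' \<and> card I' < card I" and ny: "mformal I' c'' G'' y \<noteq> 0"
      then have "Bad (card I')" unfolding Bad_def by blast
      then show False using h cI not_less_Least by metis
    qed
    then show False using L_false[OF r' _ x] by blast
  qed
qed


end
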